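(* Let $\mathcal T=(T,\lambda)$ be a temporal oriented tree and let $G$ be its connectivity graph. For every set $S\subseteq V(T)$: $S$ is contained in the vertex set of some temporal path of $\mathcal T$ if and only if $S$ is contained in a clique of $G$.
   Context: A temporal digraph is a pair $(D,\lambda)$ with $D=(V,A)$ a finite digraph and $\lambda:A\to 2^{\{1,\dots,t_{\max}\}}$ giving the time-steps at which each arc is active. A temporal oriented tree $\mathcal T=(T,\lambda)$ is one whose underlying digraph $T$ is an orientation of a tree. A temporal path is a sequence $(v_1,v_2,t_1),\dots,(v_{k-1},v_k,t_{k-1})$ with pairwise distinct $v_i$, $\overrightarrow{v_iv_{i+1}}\in A$, $t_i\in\lambda(\overrightarrow{v_iv_{i+1}})$ and $t_1<\dots<t_{k-1}$; a single vertex is also a temporal path. Two vertices $u\ne v$ are temporally connected if there is a temporal path from $u$ to $v$ or from $v$ to $u$. The connectivity graph of $\mathcal T$ is the undirected graph $G$ with $V(G)=V(T)$ and $uv\in E(G)$ iff $u\neq v$ and $u,v$ are temporally connected. *)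

theory Defs
  imports Main
begin

definition und_adj :: "('v \<times> 'v) set \<Rightarrow> 'v \<Rightarrow> 'v \<Rightarrow> bool" where
  "und_adj A u v \<longleftrightarrow> (u, v) \<in> A \<or> (v, u) \<in> A"

definition und_cycle :: "('v \<times> 'v) set \<Rightarrow> 'v list \<Rightarrow> bool" where
  "und_cycle A cs \<longleftrightarrow> length cs \<ge> 3 \<and> distinct cs \<and>
     (\<forall>i. Suc i < length cs \<longrightarrow> und_adj A (cs ! i) (cs ! Suc i)) \<and>
     und_adj A (last cs) (hd cs)"

definition und_connected :: "'v set \<Rightarrow> ('v \<times> 'v) set \<Rightarrow> bool" where
  "und_connected V A \<longleftrightarrow>
     (\<forall>u\<in>V. \<forall>v\<in>V. (u, v) \<in> {(x, y). und_adj A x y}\<^sup>*)"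

definition oriented_tree :: "'v set \<Rightarrow> ('v \<times> 'v) set \<Rightarrow> bool" where
  "oriented_tree V A \<longleftrightarrow> finite V \<and> V \<noteq> {} \<and> A \<subseteq> V \<times> V \<and>
     (\<forall>v. (v, v) \<notin> A) \<and> (\<forall>u v. (u, v) \<in> A \<longrightarrow> (v, u) \<notin> A) \<and>
     und_connected V A \<and> (\<nexists>cs. und_cycle A cs)"

definition temporal_labelling :: "('v \<times> 'v) set \<Rightarrow> nat \<Rightarrow> ('v \<times> 'v \<Rightarrow> nat set) \<Rightarrow> bool" where
  "temporal_labelling A tmax lam \<longleftrightarrow> (\<forall>a\<in>A. lam a \<subseteq> {1..tmax})"

text \<open>A temporal path with vertex sequence vs = [v_1,...,v_k] and times
  ts = [t_1,...,t_{k-1}]: the triples (v_i, v_{i+1}, t_i).\<close>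
definition temporal_path ::
  "('v \<times> 'v) set \<Rightarrow> ('v \<times> 'v \<Rightarrow> nat set) \<Rightarrow> 'v list \<Rightarrow> nat list \<Rightarrow> bool" where
  "temporal_path A lam vs ts \<longleftrightarrow> vs \<noteq> [] \<and> distinct vs \<and>
     length ts = length vs - 1 \<and>
     (\<forall>i. Suc i < length vs \<longrightarrow>
        (vs ! i, vs ! Suc i) \<in> A \<and> ts ! i \<in> lam (vs ! i, vs ! Suc i)) \<and>
     sorted_wrt (<) ts"

definition temporal_path_from_to ::
  "('v \<times> 'v) set \<Rightarrow> ('v \<times> 'v \<Rightarrow> nat set) \<Rightarrow> 'v \<Rightarrow> 'v \<Rightarrow> bool" where
  "temporal_path_from_to A lam u v \<longleftrightarrow>
     (\<exists>vs ts. temporal_path A lam vs ts \<and> hd vs = u \<and> last vs = v)"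

definition conn_edge ::
  "('v \<times> 'v) set \<Rightarrow> ('v \<times> 'v \<Rightarrow> nat set) \<Rightarrow> 'v \<Rightarrow> 'v \<Rightarrow> bool" where
  "conn_edge A lam u v \<longleftrightarrow> u \<noteq> v \<and>
     (temporal_path_from_to A lam u v \<or> temporal_path_from_to A lam v u)"

definition is_clique :: "'v set \<Rightarrow> ('v \<Rightarrow> 'v \<Rightarrow> bool) \<Rightarrow> 'v set \<Rightarrow> bool" where
  "is_clique V E C \<longleftrightarrow> C \<subseteq> V \<and> (\<forall>u\<in>C. \<forall>v\<in>C. u \<noteq> v \<longrightarrow> E u v)"

end

theory Submission imports Defs begin

definition upath :: "('v \<times> 'v) set \<Rightarrow> 'v list \<Rightarrow> bool" where
  "upath A xs \<longleftrightarrow> xs \<noteq> [] \<and> distinct xs \<and> successively (und_adj A) xs"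

lemma und_adj_sym: "und_adj A u v = und_adj A v u"
  by (auto simp: und_adj_def)

lemma und_cycleI:
  assumes "length cs \<ge> 3" "distinct cs" "successively (und_adj A) cs" "und_adj A (last cs) (hd cs)"
  shows "und_cycle A cs"
  using assms unfolding und_cycle_def successively_conv_nth by blast

lemma upath_unique:
  assumes nc: "\<nexists>cs. und_cycle A cs"
  shows "upath A p \<Longrightarrow> upath A q \<Longrightarrow> hd p = hd q \<Longrightarrow> last p = last q \<Longrightarrow> p = q"
proof (induction p arbitrary: q)
  case Nil
  then show ?case by (simp add: upath_def)
next
  case (Cons a p')
  obtain q' where q: "q = a # q'" using Cons.prems
    by (cases q) (auto simp: upath_def)
  show ?case
  proof (cases "p' = []")
    case True
    then have "last q = a" using Cons.prems by simp
    then have "q' = []" using Cons.prems(2) q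
      by (cases "q' = []") (auto simp: upath_def)
    then show ?thesis using True q by simp
  next
    case pne: False
    show ?thesis
    proof (cases "q' = []")
      case True
      then have "last (a#p') = a" using Cons.prems q by simp
      then have False using Cons.prems(1) pne by (auto simp: upath_def)
      then show ?thesis ..
    next
      case qne: False
      have up': "upath A p'" using Cons.prems(1) pne
        by (auto simp: upath_def successively_Cons)
      have uq': "upath A q'" using Cons.prems(2) qne q
        by (auto simp: upath_def successively_Cons)
      have lastpq: "last p' = last q'" using Cons.prems(4) pne qne q by simp
      show ?thesis
      proof (cases "hd p' = hd q'")
        case True
        then show ?thesis using Cons.IH[OF up' uq' True lastpq] q by simp
      next
        case False
        have "\<exists>z\<in>set p'. z \<in> set q'" using lastpq pne qne
          by (metis last_in_set)
        then obtain p1 z p2 where ps: "p' = p1 @ z # p2" "z \<in> set q'" "\<forall>y\<in>set p1. y \<notin> set q'"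
          using split_list_first_prop[of p' "\<lambda>z. z \<in> set q'"] by blast
        obtain q1 q2 where qs: "q' = q1 @ z # q2" using ps(2) split_list by metis
        define cs where "cs = a # p1 @ z # rev q1"
        have d1: "distinct (a # p1 @ [z])" using Cons.prems(1) ps(1) by (simp add: upath_def)
        have d2: "distinct (a # q1 @ [z])" using Cons.prems(2) q qs by (simp add: upath_def)
        have "distinct cs" using d1 d2 ps(3) qs unfolding cs_def by auto
        have s1: "successively (und_adj A) (a # p1 @ [z])"
          using Cons.prems(1) ps(1) unfolding upath_def
          by (metis append_Cons append_assoc append_Cons[symmetric] successively_append_iff append.simps)
        have s2: "successively (und_adj A) (a # q1 @ [z])"
          using Cons.prems(2) q qs unfolding upath_def
          by (metis append_Cons append_assoc successively_append_iff append.simps)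
        have s2': "successively (und_adj A) (z # rev q1 @ [a])"
        proof -
          have "successively (\<lambda>x y. und_adj A y x) (a # q1 @ [z])" using s2 by (simp add: und_adj_sym)
          then have "successively (und_adj A) (rev (a # q1 @ [z]))" by (simp only: successively_rev)
          then show ?thesis by simp
        qed
        have s2'': "successively (und_adj A) (z # rev q1)"
          using s2' by (metis append_Cons successively_append_iff)
        have "successively (und_adj A) cs"
        proof -
          have e: "a # p1 @ [z] = (a # p1) @ [z]" "cs = (a # p1) @ (z # rev q1)" unfolding cs_def by simp_all
          have "successively (und_adj A) (a # p1)" "und_adj A (last (a#p1)) z"
            using s1 unfolding e(1) successively_append_iff by auto
          then show ?thesis using s2'' unfolding e(2) successively_append_iff by auto
        qed
        have lt: "und_adj A (last cs) (hd cs)"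
        proof (cases "q1 = []")
          case True
          then have "hd q' = z" using qs by simp
          then show ?thesis using s2 True unfolding cs_def by (simp add: und_adj_sym)
        next
          case False
          have "last cs = hd q1" using False unfolding cs_def by (simp add: last_rev)
          then show ?thesis using s2 False unfolding cs_def
            by (cases q1) (auto simp: und_adj_sym)
        qed
        have "length cs \<ge> 3"
        proof -
          have "p1 \<noteq> [] \<or> q1 \<noteq> []" using False ps(1) qs by auto
          then have "length p1 + length q1 \<ge> 1" by (auto simp: Suc_le_eq)
          then show ?thesis unfolding cs_def by simp
        qed
        then have "und_cycle A cs" using und_cycleI \<open>distinct cs\<close> \<open>successively (und_adj A) cs\<close> lt by blast
        then show ?thesis using nc by blast
      qed
    qed
  qed
qed

lemma succ_mid:
  assumes "successively R (xs @ c # ys)"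
  shows "xs \<noteq> [] \<Longrightarrow> R (last xs) c" "ys \<noteq> [] \<Longrightarrow> R c (hd ys)"
  using assms by (auto simp: successively_append_iff successively_Cons)

lemma succ_split:
  assumes "successively R (xs @ c # ys)"
  shows "successively R (xs @ [c])" "successively R (c # ys)"
  using assms by (auto simp: successively_append_iff successively_Cons)

lemma succ_join:
  assumes "successively R (xs @ [c])" "successively R (c # ys)"
  shows "successively R (xs @ c # ys)"
  using assms by (auto simp: successively_append_iff successively_Cons)

lemma arc_und: "successively (\<lambda>u v. (u,v) \<in> A) xs \<Longrightarrow> successively (und_adj A) xs"
  by (erule successively_mono) (auto simp: und_adj_def)

lemma und_rev: "successively (und_adj A) xs \<Longrightarrow> successively (und_adj A) (rev xs)"
proof -
  assume "successively (und_adj A) xs"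
  then have "successively (\<lambda>x y. und_adj A y x) xs" by (simp add: und_adj_sym)
  then show ?thesis by (simp only: successively_rev)
qed

lemma no_branch:
  assumes nc: "\<nexists>cs. und_cycle A cs"
    and anti: "\<forall>u v. (u, v) \<in> A \<longrightarrow> (v, u) \<notin> A"
    and P: "P \<noteq> []" "distinct P" "successively (\<lambda>u v. (u,v) \<in> A) P"
    and w: "w \<notin> set P"
    and Q: "upath A Qu" "hd Qu = w" "last Qu = hd P" "\<not> set P \<subseteq> set Qu"
       "successively (\<lambda>u v. (u,v) \<in> A) Qu \<or> successively (\<lambda>u v. (u,v) \<in> A) (rev Qu)"
    and R: "upath A Ru" "hd Ru = w" "last Ru = last P" "\<not> set P \<subseteq> set Ru"
       "successively (\<lambda>u v. (u,v) \<in> A) Ru \<or> successively (\<lambda>u v. (u,v) \<in> A) (rev Ru)"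
  shows False
proof -
  have "\<exists>z\<in>set Qu. z \<in> set P" using Q(1,3) P(1) by (metis last_in_set upath_def hd_in_set)
  then obtain q1 c q2 where qs: "Qu = q1 @ c # q2" "c \<in> set P" "\<forall>y\<in>set q1. y \<notin> set P"
    using split_list_first_prop[of Qu "\<lambda>z. z \<in> set P"] by blast
  have q1ne: "q1 \<noteq> []" using qs Q(2) w by auto
  obtain p1 p2 where ps: "P = p1 @ c # p2" using qs(2) split_list by metis
  have dQ: "distinct (q1 @ [c])" using Q(1) qs(1) by (simp add: upath_def)
  have sQ: "successively (und_adj A) (q1 @ [c])" using Q(1) qs(1) succ_split(1) by (metis upath_def)
  have sP: "successively (und_adj A) (p1 @ c # p2)" using P(3) ps arc_und by metis
  have sP1: "successively (und_adj A) (c # rev p1)"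
    using und_rev[OF succ_split(1)[OF sP]] by simp
  have sP2: "successively (und_adj A) (c # p2)" using succ_split(2)[OF sP] .
  have "upath A (q1 @ c # rev p1)"
    unfolding upath_def using dQ P(2) ps qs(3) succ_join[OF sQ sP1] by auto
  moreover have "hd (q1 @ c # rev p1) = w" using Q(2) qs(1) q1ne by simp
  moreover have "last (q1 @ c # rev p1) = hd P" using ps by (cases p1) (auto simp: last_rev)
  ultimately have QX: "Qu = q1 @ c # rev p1" using upath_unique[OF nc] Q by metis
  have "upath A (q1 @ c # p2)"
    unfolding upath_def using dQ P(2) ps qs(3) succ_join[OF sQ sP2] by auto
  moreover have "hd (q1 @ c # p2) = w" using Q(2) qs(1) q1ne by simp
  moreover have "last (q1 @ c # p2) = last P" using ps by (cases p2) auto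
  ultimately have RY: "Ru = q1 @ c # p2" using upath_unique[OF nc] R by metis
  have p2ne: "p2 \<noteq> []" using Q(4) QX ps by auto
  have p1ne: "p1 \<noteq> []" using R(4) RY ps by auto
  have a1: "(last p1, c) \<in> A" using succ_mid(1)[OF P(3)[unfolded ps]] p1ne by simp
  have a2: "(c, hd p2) \<in> A" using succ_mid(2)[OF P(3)[unfolded ps]] p2ne by simp
  have a3: "(c, last q1) \<in> A"
    using Q(5)
  proof
    assume "successively (\<lambda>u v. (u,v) \<in> A) Qu"
    then have "(c, hd (rev p1)) \<in> A" using succ_mid(2)[of _ q1 c "rev p1"] QX p1ne by simp
    then have "(c, last p1) \<in> A" using p1ne by (simp add: hd_rev)
    then show ?thesis using a1 anti by blast
  next
    assume "successively (\<lambda>u v. (u,v) \<in> A) (rev Qu)"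
    then have "successively (\<lambda>u v. (u,v) \<in> A) (p1 @ c # rev q1)" using QX by simp
    then have "(c, hd (rev q1)) \<in> A" using succ_mid(2) q1ne by fastforce
    then show ?thesis using q1ne by (simp add: hd_rev)
  qed
  show False
    using R(5)
  proof
    assume "successively (\<lambda>u v. (u,v) \<in> A) Ru"
    then have "(last q1, c) \<in> A" using succ_mid(1)[of _ q1 c p2] RY q1ne by simp
    then show ?thesis using a3 anti by blast
  next
    assume "successively (\<lambda>u v. (u,v) \<in> A) (rev Ru)"
    then have "successively (\<lambda>u v. (u,v) \<in> A) (rev p2 @ c # rev q1)" using RY by simp
    then have "(last (rev p2), c) \<in> A" using succ_mid(1) p2ne by fastforce
    then have "(hd p2, c) \<in> A" using p2ne by (simp add: last_rev)
    then show ?thesis using a2 anti by blast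
  qed
qed

lemma tp_facts:
  assumes "temporal_path A lam vs ts"
  shows "vs \<noteq> []" "distinct vs" "successively (\<lambda>u v. (u,v) \<in> A) vs"
  using assms unfolding temporal_path_def successively_conv_nth by auto

lemma tp_sub:
  assumes "temporal_path A lam vs ts" "i \<le> j" "j < length vs"
  shows "temporal_path A lam (drop i (take (Suc j) vs)) (drop i (take j ts))"
  using assms unfolding temporal_path_def
  by (auto simp: sorted_wrt_take sorted_wrt_drop distinct_drop distinct_take)

lemma from_to_nth:
  assumes "temporal_path A lam vs ts" "i \<le> j" "j < length vs"
  shows "temporal_path_from_to A lam (vs ! i) (vs ! j)"
proof -
  have "hd (drop i (take (Suc j) vs)) = vs ! i" using assms(2,3)
    by (simp add: hd_drop_conv_nth)
  moreover have "last (drop i (take (Suc j) vs)) = vs ! j"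
  proof -
    have "take (Suc j) vs = take j vs @ [vs!j]" using assms(3) by (rule take_Suc_conv_app_nth)
    then have "drop i (take (Suc j) vs) = drop i (take j vs) @ [vs!j]" using assms(2,3) by simp
    then show ?thesis by simp
  qed
  ultimately show ?thesis using tp_sub[OF assms] unfolding temporal_path_from_to_def by metis
qed

lemma orient:
  assumes "temporal_path A lam Q tsQ" "(hd Q = w \<and> last Q = x) \<or> (hd Q = x \<and> last Q = w)"
  shows "\<exists>Qu. upath A Qu \<and> hd Qu = w \<and> last Qu = x \<and> set Qu = set Q \<and>
     (successively (\<lambda>u v. (u,v) \<in> A) Qu \<or> successively (\<lambda>u v. (u,v) \<in> A) (rev Qu))"
proof -
  note f = tp_facts[OF assms(1)]
  have u1: "upath A Q" using f arc_und unfolding upath_def by blast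
  have u2: "upath A (rev Q)" using f arc_und und_rev unfolding upath_def by auto
  show ?thesis using assms(2)
  proof
    assume "hd Q = w \<and> last Q = x"
    then show ?thesis using u1 f by blast
  next
    assume h: "hd Q = x \<and> last Q = w"
    then have "hd (rev Q) = w" "last (rev Q) = x" using f by (auto simp: hd_rev last_rev)
    then show ?thesis using u2 f by (intro exI[of _ "rev Q"]) auto
  qed
qed
theorem mainTheorem4:
  fixes V :: "'v set" and A :: "('v \<times> 'v) set" and tmax :: nat
    and lam :: "'v \<times> 'v \<Rightarrow> nat set" and S :: "'v set"
  assumes "oriented_tree V A"
    and "temporal_labelling A tmax lam"
    and "S \<subseteq> V"
  shows "(\<exists>vs ts. temporal_path A lam vs ts \<and> S \<subseteq> set vs) \<longleftrightarrow>
         (\<exists>C. is_clique V (conn_edge A lam) C \<and> S \<subseteq> C)"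
proof
  assume "\<exists>vs ts. temporal_path A lam vs ts \<and> S \<subseteq> set vs"
  then obtain vs ts where tp: "temporal_path A lam vs ts" and sub: "S \<subseteq> set vs" by blast
  have "is_clique V (conn_edge A lam) S"
    unfolding is_clique_def
  proof (intro conjI ballI impI)
    show "S \<subseteq> V" by fact
    fix u v assume uv: "u \<in> S" "v \<in> S" "u \<noteq> v"
    obtain i where i: "i < length vs" "vs ! i = u" using uv(1) sub by (meson in_set_conv_nth subsetD)
    obtain j where j: "j < length vs" "vs ! j = v" using uv(2) sub by (meson in_set_conv_nth subsetD)
    show "conn_edge A lam u v"
    proof (cases "i \<le> j")
      case True
      then show ?thesis using from_to_nth[OF tp True j(1)] i j uv(3) unfolding conn_edge_def by simp
    next
      case False
      then show ?thesis using from_to_nth[OF tp _ i(1), of j] i j uv(3) unfolding conn_edge_def by simp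
    qed
  qed
  then show "\<exists>C. is_clique V (conn_edge A lam) C \<and> S \<subseteq> C" by blast
next
  assume "\<exists>C. is_clique V (conn_edge A lam) C \<and> S \<subseteq> C"
  then obtain C where cl: "is_clique V (conn_edge A lam) C" "S \<subseteq> C" by blast
  have conn: "\<And>u v. u \<in> S \<Longrightarrow> v \<in> S \<Longrightarrow> u \<noteq> v \<Longrightarrow> conn_edge A lam u v"
    using cl unfolding is_clique_def by blast
  have ot: "finite V" "V \<noteq> {}" "\<forall>u v. (u, v) \<in> A \<longrightarrow> (v, u) \<notin> A" "\<nexists>cs. und_cycle A cs"
    using assms(1) unfolding oriented_tree_def by blast+
  have finS: "finite S" using ot(1) assms(3) finite_subset by blast
  have single: "\<And>v. temporal_path A lam [v] []" unfolding temporal_path_def by simp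
  show "\<exists>vs ts. temporal_path A lam vs ts \<and> S \<subseteq> set vs"
  proof (cases "S = {}")
    case True
    then show ?thesis using single by blast
  next
    case False
    then obtain s where s: "s \<in> S" by blast
    define Pn where "Pn n \<longleftrightarrow> (\<exists>vs ts. temporal_path A lam vs ts \<and> hd vs \<in> S \<and> last vs \<in> S \<and>
       n = card (S \<inter> set vs))" for n
    have "Pn (card (S \<inter> set [s]))" unfolding Pn_def using single[of s] s by (intro exI[of _ "[s]"] exI[of _ "[]"]) simp
    moreover have "\<forall>n. Pn n \<longrightarrow> n \<le> card S"
    proof (intro allI impI)
      fix n assume "Pn n"
      then obtain vs where "n = card (S \<inter> set vs)" unfolding Pn_def by blast
      then show "n \<le> card S" using card_mono[OF finS Int_lower1] by simp
    qed
    ultimately have "\<exists>m. Pn m \<and> (\<forall>y. Pn y \<longrightarrow> y \<le> m)"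
      by (rule Nat.ex_has_greatest_nat)
    then obtain m where m: "Pn m" "\<And>n. Pn n \<Longrightarrow> n \<le> m" by blast
    then obtain P tsP where P: "temporal_path A lam P tsP" "hd P \<in> S" "last P \<in> S"
      "m = card (S \<inter> set P)" unfolding Pn_def by blast
    note pf = tp_facts[OF P(1)]
    have notsub: "\<not> set P \<subseteq> set Q" if w: "w \<in> S" "w \<notin> set P"
      and Q: "temporal_path A lam Q tsQ" "hd Q \<in> S" "last Q \<in> S" "w \<in> set Q" for w Q tsQ
    proof
      assume h: "set P \<subseteq> set Q"
      have "S \<inter> set P \<subset> S \<inter> set Q" using h w Q(4) by blast
      then have "card (S \<inter> set P) < card (S \<inter> set Q)" using finS by (meson finite_Int psubset_card_mono)
      moreover have "Pn (card (S \<inter> set Q))" unfolding Pn_def using Q by blast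
      ultimately show False using m(2)[of "card (S \<inter> set Q)"] P(4) by linarith
    qed
    have branch: "\<exists>Qu. upath A Qu \<and> hd Qu = w \<and> last Qu = x \<and> \<not> set P \<subseteq> set Qu \<and>
      (successively (\<lambda>u v. (u,v) \<in> A) Qu \<or> successively (\<lambda>u v. (u,v) \<in> A) (rev Qu))"
      if w: "w \<in> S" "w \<notin> set P" and x: "x \<in> set P" "x \<in> S" for w x
    proof -
      have "conn_edge A lam w x" using conn w x by blast
      then obtain Q tsQ where Q: "temporal_path A lam Q tsQ"
        "(hd Q = w \<and> last Q = x) \<or> (hd Q = x \<and> last Q = w)"
        unfolding conn_edge_def temporal_path_from_to_def by blast
      have qne: "Q \<noteq> []" using tp_facts[OF Q(1)] by blast
      have "w \<in> set Q" using Q(2) hd_in_set[OF qne] last_in_set[OF qne] by auto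
      moreover have "hd Q \<in> S" "last Q \<in> S" using Q(2) w x by auto
      ultimately have ns: "\<not> set P \<subseteq> set Q" using notsub[OF w Q(1)] by blast
      obtain Qu where "upath A Qu" "hd Qu = w" "last Qu = x" "set Qu = set Q"
        "successively (\<lambda>u v. (u,v) \<in> A) Qu \<or> successively (\<lambda>u v. (u,v) \<in> A) (rev Qu)"
        using orient[OF Q] by blast
      then show ?thesis using ns by auto
    qed
    show ?thesis
    proof (rule ccontr)
      assume "\<not> ?thesis"
      then have "\<not> S \<subseteq> set P" using P(1) by blast
      then obtain w where w: "w \<in> S" "w \<notin> set P" by blast
      obtain Qu where Qu: "upath A Qu" "hd Qu = w" "last Qu = hd P" "\<not> set P \<subseteq> set Qu"
        "successively (\<lambda>u v. (u,v) \<in> A) Qu \<or> successively (\<lambda>u v. (u,v) \<in> A) (rev Qu)"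
        using branch[OF w hd_in_set[OF pf(1)] P(2)] by blast
      obtain Ru where Ru: "upath A Ru" "hd Ru = w" "last Ru = last P" "\<not> set P \<subseteq> set Ru"
        "successively (\<lambda>u v. (u,v) \<in> A) Ru \<or> successively (\<lambda>u v. (u,v) \<in> A) (rev Ru)"
        using branch[OF w last_in_set[OF pf(1)] P(3)] by blast
      show False using no_branch[OF ot(4) ot(3) pf w(2) Qu Ru] .
    qed
  qed
qed
end
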